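(* Let $S=(n,\phi,F)$ be a semicoherent system whose lifetime distribution has no ties. Then for every $j\in[n]$, $$I_{\mathrm{BP}}^{(j)}=\sum_{A\subseteq[n]\setminus\{j\}}r_j(A)\,m_\phi(A\cup\{j\}).$$
   Context: Semicoherent system $S=(n,\phi,F)$: $\phi:2^{[n]}\to\{0,1\}$ nondecreasing (subsets identified with Boolean vectors), $\phi(\varnothing)=0$, $\phi([n])=1$; $F$ is the joint c.d.f. of nonnegative component lifetimes $X_1,\ldots,X_n$ with $\Pr(X_i=X_k)=0$ for $i\neq k$. System lifetime $T=\inf\{t\geq0:\phi(\{i:X_i>t\})=0\}$, and $I_{\mathrm{BP}}^{(j)}=\Pr(T=X_j)$. The Möbius transform of $\phi$ is $m_\phi(A)=\sum_{B\subseteq A}(-1)^{|A|-|B|}\phi(B)$. For $j\in[n]$ and $A\subseteq[n]\setminus\{j\}$, $r_j(A)=\Pr\big(X_j<\min_{i\in A}X_i\big)$ (empty min $=+\infty$). *)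

theory Defs
  imports "HOL-Probability.Probability"
begin

text \<open>Component index set [n] = {1..n}. Structure functions are Boolean-valued
  functions on subsets of [n]; they are identified with {0,1}-valued functions via of_bool.\<close>

definition semicoherent :: "nat \<Rightarrow> (nat set \<Rightarrow> bool) \<Rightarrow> bool" where
  "semicoherent n phi \<longleftrightarrow>
     (\<forall>A B. A \<subseteq> B \<and> B \<subseteq> {1..n} \<and> phi A \<longrightarrow> phi B) \<and>
     \<not> phi {} \<and> phi {1..n}"

definition mobius :: "(nat set \<Rightarrow> bool) \<Rightarrow> nat set \<Rightarrow> real" where
  "mobius phi A = (\<Sum>B\<in>Pow A. (-1::real) ^ (card A - card B) * of_bool (phi B))"

definition sys_lifetime :: "nat \<Rightarrow> (nat set \<Rightarrow> bool) \<Rightarrow> (nat \<Rightarrow> 'a \<Rightarrow> real) \<Rightarrow> 'a \<Rightarrow> real" where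
  "sys_lifetime n phi X \<omega> = Inf {t. 0 \<le> t \<and> \<not> phi {i\<in>{1..n}. X i \<omega> > t}}"

definition I_BP :: "'a measure \<Rightarrow> nat \<Rightarrow> (nat set \<Rightarrow> bool) \<Rightarrow> (nat \<Rightarrow> 'a \<Rightarrow> real) \<Rightarrow> nat \<Rightarrow> real" where
  "I_BP M n phi X j = measure M {\<omega>\<in>space M. sys_lifetime n phi X \<omega> = X j \<omega>}"

text \<open>r_j(A) = Pr(X_j < min_{i\<in>A} X_i), empty min = +\<infinity>.\<close>
definition r_prob :: "'a measure \<Rightarrow> (nat \<Rightarrow> 'a \<Rightarrow> real) \<Rightarrow> nat \<Rightarrow> nat set \<Rightarrow> real" where
  "r_prob M X j A = measure M {\<omega>\<in>space M. \<forall>i\<in>A. X j \<omega> < X i \<omega>}"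

end

theory Submission
  imports Defs
begin


lemma alt_sum_Pow:
  assumes "finite S"
  shows "(\<Sum>D\<in>Pow S. (-1::real) ^ card D) = (if S = {} then 1 else 0)"
  using assms
proof (induction S rule: finite_induct)
  case empty
  then show ?case by simp
next
  case (insert x S)
  have "(\<Sum>D\<in>Pow (insert x S). (-1::real) ^ card D)
     = (\<Sum>D\<in>Pow S. (-1::real) ^ card D) + (\<Sum>D\<in>insert x ` Pow S. (-1::real) ^ card D)"
    unfolding Pow_insert using insert by (subst sum.union_disjoint) auto
  also have "(\<Sum>D\<in>insert x ` Pow S. (-1::real) ^ card D) = (\<Sum>D\<in>Pow S. (-1::real) ^ card (insert x D))"
    apply (rule sum.reindex_cong[where l="insert x"])
    using insert by (auto simp: inj_on_def) 
  also have "\<dots> = - (\<Sum>D\<in>Pow S. (-1::real) ^ card D)"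
    apply (subst sum_negf[symmetric])
    apply (rule sum.cong, simp)
    using insert by (auto simp: card_insert_if finite_subset dest: subsetD)
  finally show ?case by simp
qed

lemma mobius_inv:
  assumes "finite C"
  shows "(\<Sum>A\<in>Pow C. mobius f A) = of_bool (f C)"
proof -
  have "(\<Sum>A\<in>Pow C. mobius f A)
     = (\<Sum>A\<in>Pow C. \<Sum>B\<in>{B\<in>Pow C. B \<subseteq> A}. (-1::real) ^ (card A - card B) * of_bool (f B))"
    unfolding mobius_def
    by (rule sum.cong, simp, rule sum.cong, auto)
  also have "\<dots> = (\<Sum>B\<in>Pow C. \<Sum>A\<in>{A\<in>Pow C. B \<subseteq> A}. (-1::real) ^ (card A - card B) * of_bool (f B))"
    by (rule sum.swap_restrict) (use assms in auto)
  also have "\<dots> = (\<Sum>B\<in>Pow C. of_bool (f B) * (if C - B = {} then 1 else 0))"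
  proof (rule sum.cong, simp)
    fix B assume B: "B \<in> Pow C"
    have fB: "finite B" using B assms finite_subset by auto
    have "(\<Sum>A\<in>{A\<in>Pow C. B \<subseteq> A}. (-1::real) ^ (card A - card B) * of_bool (f B))
        = (\<Sum>D\<in>Pow (C - B). (-1::real) ^ (card (B \<union> D) - card B) * of_bool (f B))"
      apply (rule sum.reindex_cong[where l="\<lambda>D. B \<union> D"])
        apply (auto simp: inj_on_def)
      using B apply blast
      done
    also have "\<dots> = of_bool (f B) * (\<Sum>D\<in>Pow (C - B). (-1::real) ^ card D)"
      apply (subst sum_distrib_left)
      apply (rule sum.cong, simp)
      using fB assms by (subst card_Un_disjoint) (auto intro: finite_subset)
    also have "\<dots> = of_bool (f B) * (if C - B = {} then 1 else 0)"
      using assms by (simp add: alt_sum_Pow)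
    finally show "(\<Sum>A\<in>{A\<in>Pow C. B \<subseteq> A}. (-1::real) ^ (card A - card B) * of_bool (f B))
        = of_bool (f B) * (if C - B = {} then 1 else 0)" .
  qed
  also have "\<dots> = (\<Sum>B\<in>{C}. of_bool (f B) * (if C - B = {} then 1 else 0))"
    by (rule sum.mono_neutral_right) (use assms in auto)
  finally show ?thesis by simp
qed



lemma sets_setfun:
  assumes "finite I" "\<And>i. i \<in> I \<Longrightarrow> {\<omega>\<in>space M. Q i \<omega>} \<in> sets M"
  shows "{\<omega>\<in>space M. P {i\<in>I. Q i \<omega>}} \<in> sets M"
proof -
  have eq: "{\<omega>\<in>space M. P {i\<in>I. Q i \<omega>}} =
     (\<Union>D\<in>{D\<in>Pow I. P D}. {\<omega>\<in>space M. \<forall>i\<in>I. (Q i \<omega> \<longleftrightarrow> i \<in> D)})"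
  proof (rule set_eqI, rule iffI)
    fix \<omega> assume "\<omega> \<in> {\<omega>\<in>space M. P {i\<in>I. Q i \<omega>}}"
    then show "\<omega> \<in> (\<Union>D\<in>{D\<in>Pow I. P D}. {\<omega>\<in>space M. \<forall>i\<in>I. (Q i \<omega> \<longleftrightarrow> i \<in> D)})"
      by (intro UN_I[of "{i\<in>I. Q i \<omega>}"]) auto
  next
    fix \<omega> assume "\<omega> \<in> (\<Union>D\<in>{D\<in>Pow I. P D}. {\<omega>\<in>space M. \<forall>i\<in>I. (Q i \<omega> \<longleftrightarrow> i \<in> D)})"
    then obtain D where D: "D \<subseteq> I" "P D" "\<omega> \<in> space M" "\<forall>i\<in>I. (Q i \<omega> \<longleftrightarrow> i \<in> D)" by auto
    then have "{i\<in>I. Q i \<omega>} = D" by auto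
    then show "\<omega> \<in> {\<omega>\<in>space M. P {i\<in>I. Q i \<omega>}}" using D by auto
  qed
  have "{\<omega>\<in>space M. \<forall>i\<in>I. (Q i \<omega> \<longleftrightarrow> i \<in> D)} \<in> sets M" for D
  proof (cases "I = {}")
    case True then show ?thesis by simp
  next
    case False
    show ?thesis
    proof (rule sets.sets_Collect_finite_All'[OF _ assms(1) False])
      fix i assume i: "i \<in> I"
      show "{\<omega>\<in>space M. (Q i \<omega> \<longleftrightarrow> i \<in> D)} \<in> sets M"
      proof (cases "i \<in> D")
        case True then show ?thesis using assms(2)[OF i] by simp
      next
        case False
        have "{\<omega>\<in>space M. (Q i \<omega> \<longleftrightarrow> i \<in> D)} = space M - {\<omega>\<in>space M. Q i \<omega>}"
          using False by auto
        then show ?thesis using assms(2)[OF i] by auto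
      qed
    qed
  qed
  then show ?thesis unfolding eq using assms(1) by (intro sets.finite_UN) auto
qed

lemma measure_setfun_sum:
  assumes "finite_measure M" "finite K"
    and "\<And>P. {\<omega>\<in>space M. P (f \<omega>)} \<in> sets M"
  shows "measure M {\<omega>\<in>space M. f \<omega> \<in> K} = (\<Sum>C\<in>K. measure M {\<omega>\<in>space M. f \<omega> = C})"
  using assms(2)
proof (induction K rule: finite_induct)
  case empty then show ?case by simp
next
  case (insert x K)
  interpret finite_measure M by fact
  have "{\<omega>\<in>space M. f \<omega> \<in> insert x K} = {\<omega>\<in>space M. f \<omega> = x} \<union> {\<omega>\<in>space M. f \<omega> \<in> K}"
    by auto
  then have "measure M {\<omega>\<in>space M. f \<omega> \<in> insert x K} =
     measure M {\<omega>\<in>space M. f \<omega> = x} + measure M {\<omega>\<in>space M. f \<omega> \<in> K}"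
    using insert assms(3)[of "\<lambda>C. C = x"] assms(3)[of "\<lambda>C. C \<in> K"]
    by (simp add: finite_measure_Union, subst finite_measure_Union) auto
  then show ?case using insert by simp
qed



lemma semico_mono: "semicoherent n phi \<Longrightarrow> A \<subseteq> B \<Longrightarrow> B \<subseteq> {1..n} \<Longrightarrow> phi A \<Longrightarrow> phi B"
  unfolding semicoherent_def by blast

lemma life_le:
  fixes x :: "nat \<Rightarrow> real"
  assumes sc: "semicoherent n phi"
  defines "T \<equiv> Inf {t. 0 \<le> t \<and> \<not> phi {i\<in>{1..n}. x i > t}}"
  shows "T \<le> s \<longleftrightarrow> (0 \<le> s \<and> \<not> phi {i\<in>{1..n}. x i > s})"
proof -
  define S where "S = {t. 0 \<le> t \<and> \<not> phi {i\<in>{1..n}. x i > t}}"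
  have T: "T = Inf S" unfolding T_def S_def ..
  have up: "t' \<in> S" if "t \<in> S" "t \<le> t'" for t t'
  proof -
    have "\<not> phi {i\<in>{1..n}. x i > t'}"
    proof
      assume "phi {i\<in>{1..n}. x i > t'}"
      then have "phi {i\<in>{1..n}. x i > t}"
        by (rule semico_mono[OF sc, rotated 2]) (use that in auto)
      then show False using that unfolding S_def by auto
    qed
    then show ?thesis using that unfolding S_def by auto
  qed
  define m where "m = max 0 (Max (x ` {1..n}))"
  have e: "{i\<in>{1..n}. x i > m} = {}"
    unfolding m_def by (auto simp: not_less intro: max.coboundedI2)
  have "0 \<le> m" unfolding m_def by simp
  moreover have "\<not> phi {i\<in>{1..n}. x i > m}" using sc unfolding semicoherent_def by (subst e) simp
  ultimately have mS: "m \<in> S" unfolding S_def by simp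
  have bdd: "bdd_below S" unfolding S_def by (rule bdd_belowI[of _ 0]) auto
  have T0: "0 \<le> T" unfolding T using mS by (intro cInf_greatest) (auto simp: S_def)
  have TS: "T \<in> S"
  proof (rule ccontr)
    assume nT: "T \<notin> S"
    then have ph: "phi {i\<in>{1..n}. x i > T}" using T0 unfolding S_def by auto
    define L where "L = {i\<in>{1..n}. x i > T}"
    have Lne: "L \<noteq> {}"
    proof
      assume "L = {}" then have "phi {}" using ph unfolding L_def by (simp only:)
      then show False using sc unfolding semicoherent_def by simp
    qed
    define d where "d = Min ((\<lambda>i. x i - T) ` L)"
    have d0: "d > 0" unfolding d_def using Lne by (subst Min_gr_iff) (auto simp: L_def)
    have "Inf S < T + d" using d0 T by simp
    then obtain t where t: "t \<in> S" "t < T + d"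
      using mS bdd by (subst (asm) cInf_less_iff) auto
    have tT: "T \<le> t" unfolding T using t bdd by (intro cInf_lower) auto
    have sub: "L \<subseteq> {i\<in>{1..n}. x i > t}"
    proof
      fix i assume i: "i \<in> L"
      have "d \<le> x i - T" unfolding d_def using i by (intro Min_le) (auto simp: L_def)
      then show "i \<in> {i\<in>{1..n}. x i > t}" using t i by (auto simp: L_def)
    qed
    have "phi {i\<in>{1..n}. x i > t}"
      by (rule semico_mono[OF sc sub _ ph[folded L_def]]) auto
    then show False using t unfolding S_def by auto
  qed
  have "T \<le> s \<longleftrightarrow> s \<in> S"
  proof
    assume "T \<le> s" then show "s \<in> S" using up TS by blast
  next
    assume "s \<in> S" then show "T \<le> s" unfolding T using bdd by (intro cInf_lower) auto
  qed
  then show ?thesis unfolding S_def by simp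
qed

lemma life_eq:
  fixes x :: "nat \<Rightarrow> real"
  assumes sc: "semicoherent n phi" and j: "j \<in> {1..n}"
    and nn: "\<And>i. i \<in> {1..n} \<Longrightarrow> 0 \<le> x i"
    and dist: "\<And>i k. i \<in> {1..n} \<Longrightarrow> k \<in> {1..n} \<Longrightarrow> i \<noteq> k \<Longrightarrow> x i \<noteq> x k"
  defines "T \<equiv> Inf {t. 0 \<le> t \<and> \<not> phi {i\<in>{1..n}. x i > t}}"
  defines "B \<equiv> {i\<in>{1..n} - {j}. x j < x i}"
  shows "T = x j \<longleftrightarrow> (phi (insert j B) \<and> \<not> phi B)"
proof -
  have L: "T \<le> s \<longleftrightarrow> (0 \<le> s \<and> \<not> phi {i\<in>{1..n}. x i > s})" for s
    unfolding T_def by (rule life_le[OF sc])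
  have aj: "{i\<in>{1..n}. x i > x j} = B" unfolding B_def by auto
  have Bsub: "insert j B \<subseteq> {1..n}" using j unfolding B_def by auto
  show ?thesis
  proof
    assume Tx: "T = x j"
    have nB: "\<not> phi B" using L[of "x j"] Tx aj by simp
    have "phi (insert j B)"
    proof (cases "x j = 0")
      case True
      have "insert j B = {1..n}"
      proof
        show "{1..n} \<subseteq> insert j B"
        proof
          fix i assume i: "i \<in> {1..n}"
          show "i \<in> insert j B"
          proof (cases "i = j")
            case False
            then have "x i \<noteq> x j" using dist i j by auto
            then have "x j < x i" using nn[OF i] True by auto
            then show ?thesis using i False unfolding B_def by auto
          qed simp
        qed
      qed (rule Bsub)
      then show ?thesis using sc unfolding semicoherent_def by simp
    next
      case False
      then have xj: "x j > 0" using nn[OF j] by simp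
      define t where "t = Max (insert 0 {x i |i. i \<in> {1..n} \<and> x i < x j})"
      have fin: "finite (insert 0 {x i |i. i \<in> {1..n} \<and> x i < x j})" by simp
      have t0: "0 \<le> t" unfolding t_def using fin by (intro Max_ge) auto
      have tlt: "t < x j" unfolding t_def using fin xj by (subst Max_less_iff) auto
      have ge: "x i \<le> t" if "i \<in> {1..n}" "x i < x j" for i
        unfolding t_def using fin that by (intro Max_ge) auto
      have "\<not> T \<le> t" using Tx tlt by simp
      then have ph: "phi {i\<in>{1..n}. x i > t}" using L t0 by simp
      have "{i\<in>{1..n}. x i > t} = insert j B"
      proof
        show "{i\<in>{1..n}. x i > t} \<subseteq> insert j B"
        proof
          fix i assume i: "i \<in> {i\<in>{1..n}. x i > t}"
          show "i \<in> insert j B"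
          proof (cases "i = j")
            case False
            then have "x i \<noteq> x j" using dist i j by auto
            moreover have "\<not> x i < x j" using ge i by force
            ultimately show ?thesis using i False unfolding B_def by auto
          qed simp
        qed
      next
        show "insert j B \<subseteq> {i\<in>{1..n}. x i > t}" using j tlt unfolding B_def by auto
      qed
      then show ?thesis using ph by simp
    qed
    then show "phi (insert j B) \<and> \<not> phi B" using nB by simp
  next
    assume H: "phi (insert j B) \<and> \<not> phi B"
    have le: "T \<le> x j" using L[of "x j"] aj H nn[OF j] by simp
    have "\<not> T < x j"
    proof
      assume lt: "T < x j"
      have "0 \<le> T" "\<not> phi {i\<in>{1..n}. x i > T}" using L[of T] by auto
      moreover have "insert j B \<subseteq> {i\<in>{1..n}. x i > T}" using j lt unfolding B_def by auto
      ultimately show False using H semico_mono[OF sc] by blast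
    qed
    then show "T = x j" using le by simp
  qed
qed


lemma mobius_ins:
  assumes "finite C" "j \<notin> C"
  shows "(\<Sum>A\<in>Pow C. mobius f (insert j A)) = of_bool (f (insert j C)) - of_bool (f C)"
proof -
  have "of_bool (f (insert j C)) = (\<Sum>A\<in>Pow (insert j C). mobius f A)"
    using assms by (simp add: mobius_inv)
  also have "\<dots> = (\<Sum>A\<in>Pow C. mobius f A) + (\<Sum>A\<in>insert j ` Pow C. mobius f A)"
    unfolding Pow_insert using assms by (subst sum.union_disjoint) auto
  also have "(\<Sum>A\<in>insert j ` Pow C. mobius f A) = (\<Sum>A\<in>Pow C. mobius f (insert j A))"
    apply (rule sum.reindex_cong[where l="insert j"])
    using assms by (auto simp: inj_on_def)
  finally show ?thesis using assms by (simp add: mobius_inv)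
qed

theorem corollary6:
  fixes M :: "'a measure" and n :: nat and phi :: "nat set \<Rightarrow> bool"
    and X :: "nat \<Rightarrow> 'a \<Rightarrow> real" and j :: nat
  assumes "prob_space M"
    and "semicoherent n phi"
    and "\<And>i. i \<in> {1..n} \<Longrightarrow> X i \<in> borel_measurable M"
    and "\<And>i \<omega>. i \<in> {1..n} \<Longrightarrow> \<omega> \<in> space M \<Longrightarrow> 0 \<le> X i \<omega>"
    and "\<And>i k. i \<in> {1..n} \<Longrightarrow> k \<in> {1..n} \<Longrightarrow> i \<noteq> k \<Longrightarrow>
           measure M {\<omega>\<in>space M. X i \<omega> = X k \<omega>} = 0"
    and "j \<in> {1..n}"
  shows "I_BP M n phi X j =
           (\<Sum>A\<in>Pow ({1..n} - {j}). r_prob M X j A * mobius phi (insert j A))"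
proof -
  interpret prob_space M by fact
  note sc = assms(2) and meas = assms(3) and jn = assms(6)
  define U where "U = {1..n} - {j}"
  have finU: "finite U" unfolding U_def by simp
  define Bs where "Bs \<omega> = {i\<in>U. X j \<omega> < X i \<omega>}" for \<omega>
  define T where "T \<omega> = sys_lifetime n phi X \<omega>" for \<omega>
  have setsB: "{\<omega>\<in>space M. P (Bs \<omega>)} \<in> sets M" for P
    unfolding Bs_def
  proof (rule sets_setfun[OF finU])
    fix i assume "i \<in> U"
    then show "{\<omega> \<in> space M. X j \<omega> < X i \<omega>} \<in> sets M"
      using meas jn by (intro borel_measurable_less) (auto simp: U_def)
  qed
  have setsA: "{\<omega>\<in>space M. P {i\<in>{1..n}. X i \<omega> > s}} \<in> sets M" for P s
  proof (rule sets_setfun)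
    fix i assume "i \<in> {1..n}"
    then show "{\<omega> \<in> space M. s < X i \<omega>} \<in> sets M"
      using meas by (intro borel_measurable_less) auto
  qed simp
  have Tle: "T \<omega> \<le> s \<longleftrightarrow> (0 \<le> s \<and> \<not> phi {i\<in>{1..n}. X i \<omega> > s})" for \<omega> s
    unfolding T_def sys_lifetime_def by (rule life_le[OF sc])
  have Tmeas: "T \<in> borel_measurable M"
  proof (rule borel_measurableI_le)
    fix y
    show "{\<omega> \<in> space M. T \<omega> \<le> y} \<in> sets M"
      unfolding Tle by (rule setsA)
  qed
  define E where "E = {\<omega>\<in>space M. sys_lifetime n phi X \<omega> = X j \<omega>}"
  have Esets: "E \<in> sets M"
    unfolding E_def using Tmeas meas[OF jn] unfolding T_def[symmetric]
    by (intro borel_measurable_eq) auto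
  define K1 where "K1 = {C\<in>Pow U. phi (insert j C) \<and> \<not> phi C}"
  define E' where "E' = {\<omega>\<in>space M. Bs \<omega> \<in> K1}"
  have E'sets: "E' \<in> sets M" unfolding E'_def by (rule setsB)
  have AEd: "AE \<omega> in M. \<forall>p\<in>{1..n}\<times>{1..n}. fst p \<noteq> snd p \<longrightarrow> X (fst p) \<omega> \<noteq> X (snd p) \<omega>"
  proof (rule AE_finite_allI)
    fix p assume p: "p \<in> {1..n}\<times>{1..n}"
    show "AE \<omega> in M. fst p \<noteq> snd p \<longrightarrow> X (fst p) \<omega> \<noteq> X (snd p) \<omega>"
    proof (cases "fst p = snd p")
      case False
      let ?N = "{\<omega>\<in>space M. X (fst p) \<omega> = X (snd p) \<omega>}"
      have Ns: "?N \<in> sets M" using meas p by (intro borel_measurable_eq) auto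
      have "measure M ?N = 0" using assms(5) p False by auto
      then have "?N \<in> null_sets M" using Ns by (intro null_setsI) (simp add: emeasure_eq_measure)
      then show ?thesis by (rule AE_I') auto
    qed simp
  qed simp
  have AEeq: "AE \<omega> in M. \<omega> \<in> E \<longleftrightarrow> \<omega> \<in> E'"
    using AEd
  proof (rule AE_mp, intro AE_I2 impI)
    fix \<omega> assume \<omega>: "\<omega> \<in> space M"
      and d: "\<forall>p\<in>{1..n}\<times>{1..n}. fst p \<noteq> snd p \<longrightarrow> X (fst p) \<omega> \<noteq> X (snd p) \<omega>"
    have "sys_lifetime n phi X \<omega> = X j \<omega> \<longleftrightarrow> (phi (insert j (Bs \<omega>)) \<and> \<not> phi (Bs \<omega>))"
      unfolding sys_lifetime_def Bs_def U_def
      by (rule life_eq[OF sc jn]) (use assms(4)[OF _ \<omega>] d in auto)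
    moreover have "Bs \<omega> \<in> Pow U" unfolding Bs_def by auto
    ultimately show "\<omega> \<in> E \<longleftrightarrow> \<omega> \<in> E'" unfolding E_def E'_def K1_def using \<omega> by auto
  qed
  define p where "p C = measure M {\<omega>\<in>space M. Bs \<omega> = C}" for C
  have sumK: "measure M {\<omega>\<in>space M. Bs \<omega> \<in> K} = (\<Sum>C\<in>K. p C)" if "finite K" for K
    unfolding p_def by (rule measure_setfun_sum[OF _ that setsB]) unfold_locales
  have lhs: "I_BP M n phi X j = (\<Sum>C\<in>K1. p C)"
  proof -
    have "I_BP M n phi X j = measure M E" unfolding I_BP_def E_def ..
    also have "\<dots> = measure M E'" by (rule measure_eq_AE[OF AEeq Esets E'sets])
    also have "\<dots> = (\<Sum>C\<in>K1. p C)" unfolding E'_def using finU by (intro sumK) (simp add: K1_def)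
    finally show ?thesis .
  qed
  have r: "r_prob M X j A = (\<Sum>C\<in>{C\<in>Pow U. A \<subseteq> C}. p C)" if A: "A \<in> Pow U" for A
  proof -
    have "{\<omega>\<in>space M. \<forall>i\<in>A. X j \<omega> < X i \<omega>} = {\<omega>\<in>space M. Bs \<omega> \<in> {C\<in>Pow U. A \<subseteq> C}}"
      using A unfolding Bs_def by auto
    moreover have "finite {C\<in>Pow U. A \<subseteq> C}" using finU by simp
    ultimately show ?thesis unfolding r_prob_def by (simp only: sumK)
  qed
  have "(\<Sum>A\<in>Pow U. r_prob M X j A * mobius phi (insert j A))
      = (\<Sum>A\<in>Pow U. \<Sum>C\<in>{C\<in>Pow U. A \<subseteq> C}. p C * mobius phi (insert j A))"
    by (rule sum.cong) (simp_all add: r sum_distrib_right)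
  also have "\<dots> = (\<Sum>C\<in>Pow U. \<Sum>A\<in>{A\<in>Pow U. A \<subseteq> C}. p C * mobius phi (insert j A))"
    by (rule sum.swap_restrict) (use finU in auto)
  also have "\<dots> = (\<Sum>C\<in>Pow U. p C * (of_bool (phi (insert j C)) - of_bool (phi C)))"
  proof (rule sum.cong, simp)
    fix C assume C: "C \<in> Pow U"
    have "{A\<in>Pow U. A \<subseteq> C} = Pow C" using C by auto
    moreover have "finite C" "j \<notin> C" using C finU finite_subset unfolding U_def by auto
    ultimately show "(\<Sum>A\<in>{A\<in>Pow U. A \<subseteq> C}. p C * mobius phi (insert j A))
        = p C * (of_bool (phi (insert j C)) - of_bool (phi C))"
      by (simp add: sum_distrib_left[symmetric] mobius_ins)
  qed
  also have "\<dots> = (\<Sum>C\<in>K1. p C * (of_bool (phi (insert j C)) - of_bool (phi C)))"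
  proof (rule sum.mono_neutral_right)
    show "finite (Pow U)" using finU by simp
    show "K1 \<subseteq> Pow U" unfolding K1_def by auto
    show "\<forall>C\<in>Pow U - K1. p C * (of_bool (phi (insert j C)) - of_bool (phi C)) = 0"
    proof
      fix C assume C: "C \<in> Pow U - K1"
      have "phi C \<Longrightarrow> phi (insert j C)"
        by (rule semico_mono[OF sc, of C]) (use C jn in \<open>auto simp: U_def\<close>)
      then show "p C * (of_bool (phi (insert j C)) - of_bool (phi C)) = 0"
        using C unfolding K1_def by auto
    qed
  qed
  also have "\<dots> = (\<Sum>C\<in>K1. p C)"
    by (rule sum.cong) (auto simp: K1_def)
  finally show ?thesis using lhs unfolding U_def by simp
qed

end
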